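(* Let $M,N,d$ be positive integers. For $i=1,\dots,M$ and $j=1,\dots,N$ let $x_{ij}\in\mathbb{R}^d$ and $y_{ij}\in\{+1,-1\}$, where the points $(x_{ij})$ are drawn from a continuous (absolutely continuous) distribution and the dataset satisfies the separability assumption: each $C_i=\{w\in\mathbb{R}^d:\ y_{ij}x_{ij}^Tw\ge 1,\ j=1,\dots,N\}$ is nonempty and $\bar C=\bigcap_{i=1}^M C_i\neq\emptyset$. For $\lambda>0$ define Local-GD iterates by $w_0^0=0$ and, for $k\ge 0$, $$w_i^{k+1}=\arg\min_{w\in\mathbb{R}^d}\ \sum_{j=1}^N\exp(-y_{ij}x_{ij}^Tw)+\frac{\lambda}{2}\|w-w_0^k\|^2,\qquad w_0^{k+1}=\frac1M\sum_{i=1}^M w_i^{k+1},$$ and define the Parallel Projection (local max-margin) iterates by $\bar w_0^0=0$ and $$\bar w_i^{k+1}=\arg\min_{w\in\mathbb{R}^d}\|w-\bar w_0^k\|\ \text{ s.t. }\ y_{ij}x_{ij}^Tw\ge1\ (j=1,\dots,N),\qquad \bar w_0^{k+1}=\frac1M\sum_{i=1}^M\bar w_i^{k+1}.$$ Then for almost all such datasets, $w_0^k\to\ln(1/\lambda)\,\bar w_0^k$ in the sense that $\|w_0^k-\ln(1/\lambda)\bar w_0^k\|=O(k\ln\ln(1/\lambda))$ as $\lambda\to0$. Consequently, at any round $k=o\!\left(\frac{\ln(1/\lambda)}{\ln\ln(1/\lambda)}\right)$, $$\lim_{\lambda\to0}\frac{w_0^k}{\|w_0^k\|}=\frac{\bar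 w_0^k}{\|\bar w_0^k\|}.$$
   Context: This is Local-GD for binary linear classification over $M$ compute nodes, node $i$ holding samples $(x_{ij},y_{ij})_{j=1}^N$; each local strongly convex problem (exponential loss plus weak proximal regularization with parameter $\lambda$) is solved exactly (its unique minimizer) in every round. The second sequence is the Parallel Projection Method: $\bar w_i^{k+1}$ is the Euclidean projection of $\bar w_0^k$ onto the closed convex set $C_i$. *)

theory Defs
  imports "HOL-Analysis.Analysis" "HOL-Library.Landau_Symbols"
begin

text \<open>Dataset: X $ i $ j = x_ij in R^d (i a node, j a sample), labels y i j in {+1,-1}.
  Node index type 'm (M = CARD('m)), sample index type 'n (N = CARD('n)),
  dimension type 'd (d = CARD('d)).\<close>

definition Cset :: "real^'d^'n^'m \<Rightarrow> ('m \<Rightarrow> 'n \<Rightarrow> real) \<Rightarrow> 'm \<Rightarrow> (real^'d) set" where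
  "Cset X y i = {w. \<forall>j. y i j * (X $ i $ j \<bullet> w) \<ge> 1}"

definition separable :: "real^'d^'n^'m \<Rightarrow> ('m \<Rightarrow> 'n \<Rightarrow> real) \<Rightarrow> bool" where
  "separable X y \<longleftrightarrow> (\<forall>i. Cset X y i \<noteq> {}) \<and> (\<Inter>i. Cset X y i) \<noteq> {}"

definition local_obj :: "real^'d^'n^'m \<Rightarrow> ('m \<Rightarrow> 'n \<Rightarrow> real) \<Rightarrow> real \<Rightarrow> real^'d \<Rightarrow> 'm \<Rightarrow> real^'d \<Rightarrow> real" where
  "local_obj X y lam w0 i w =
     (\<Sum>j\<in>UNIV. exp (- (y i j * (X $ i $ j \<bullet> w)))) + lam / 2 * (norm (w - w0))^2"

definition local_min :: "real^'d^'n^'m \<Rightarrow> ('m \<Rightarrow> 'n \<Rightarrow> real) \<Rightarrow> real \<Rightarrow> real^'d \<Rightarrow> 'm \<Rightarrow> real^'d" where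
  "local_min X y lam w0 i = (THE w. \<forall>v. local_obj X y lam w0 i w \<le> local_obj X y lam w0 i v)"

primrec lgd :: "real^'d^'n^'m \<Rightarrow> ('m \<Rightarrow> 'n \<Rightarrow> real) \<Rightarrow> real \<Rightarrow> nat \<Rightarrow> real^'d" where
  "lgd X y lam 0 = 0"
| "lgd X y lam (Suc k) = (1 / real CARD('m)) *\<^sub>R (\<Sum>i\<in>UNIV. local_min X y lam (lgd X y lam k) i)"

primrec ppm :: "real^'d^'n^'m \<Rightarrow> ('m \<Rightarrow> 'n \<Rightarrow> real) \<Rightarrow> nat \<Rightarrow> real^'d" where
  "ppm X y 0 = 0"
| "ppm X y (Suc k) = (1 / real CARD('m)) *\<^sub>R (\<Sum>i\<in>UNIV. closest_point (Cset X y i) (ppm X y k))"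

end

theory Submission
  imports Defs
begin


definition polyh :: "('n::finite \<Rightarrow> 'v::euclidean_space) \<Rightarrow> ('n \<Rightarrow> real) \<Rightarrow> 'v set" where
  "polyh a b = {w. \<forall>j. b j \<le> a j \<bullet> w}"

lemma polyh_eq_INT: "polyh a b = (\<Inter>j. {w. inner (a j) w \<ge> b j})"
  unfolding polyh_def by auto

lemma closed_polyh: "closed (polyh a b)"
  unfolding polyh_eq_INT by (intro closed_INT ballI closed_halfspace_ge)

lemma convex_poly: "convex (polyh a b)"
  unfolding polyh_eq_INT by (intro convex_INT ballI convex_halfspace_ge)

lemma polyh_nonempty:
  assumes c: "\<forall>j. 1 \<le> a j \<bullet> c"
  shows "(\<Sum>j\<in>UNIV. \<bar>b j\<bar>) *\<^sub>R c \<in> polyh a b"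
proof -
  have "b j \<le> a j \<bullet> ((\<Sum>j\<in>UNIV. \<bar>b j\<bar>) *\<^sub>R c)" for j
  proof -
    let ?s = "\<Sum>j\<in>UNIV. \<bar>b j\<bar>"
    have "b j \<le> \<bar>b j\<bar>" by simp
    also have "\<dots> \<le> ?s" by (rule member_le_sum) auto
    also have "\<dots> \<le> ?s * (a j \<bullet> c)"
    proof -
      have "?s \<ge> 0" by (simp add: sum_nonneg)
      then show ?thesis using mult_left_mono[OF c[rule_format, of j], of ?s] by simp
    qed
    finally show ?thesis by simp
  qed
  then show ?thesis unfolding polyh_def by auto
qed

lemma polyh_ne: "\<forall>j. 1 \<le> a j \<bullet> c \<Longrightarrow> polyh a b \<noteq> {}"
  using polyh_nonempty by blast

lemma closest_point_char:
  fixes S :: "'v::euclidean_space set"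
  assumes "convex S" "closed S" "x \<in> S" "\<forall>z\<in>S. inner (p - x) (z - x) \<le> 0"
  shows "closest_point S p = x"
proof -
  have "dist p x \<le> dist p z" if "z \<in> S" for z
  proof -
    have "(dist p z)^2 = (norm ((p - x) - (z - x)))^2" by (simp add: dist_norm)
    also have "\<dots> = (norm (p - x))^2 - 2 * inner (p - x) (z - x) + (norm (z - x))^2"
      by (simp add: power2_norm_eq_inner inner_diff_left inner_diff_right inner_commute)
    also have "\<dots> \<ge> (norm (p - x))^2"
    proof -
      have "inner (p - x) (z - x) \<le> 0" using assms(4) that by blast
      then show ?thesis using zero_le_power2[of "norm (z - x)"] by linarith
    qed
    finally have "(dist p x)^2 \<le> (dist p z)^2" by (simp add: dist_norm)
    then show ?thesis by (simp add: power2_le_iff_abs_le)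
  qed
  then show ?thesis using closest_point_unique[OF assms(1-3)] by metis
qed

lemma proj_orth:
  fixes a :: "'n::finite \<Rightarrow> 'v::euclidean_space" and b x
  assumes c: "\<forall>j. 1 \<le> a j \<bullet> c"
  defines "y \<equiv> closest_point (polyh a b) x"
  assumes v: "\<forall>j. a j \<bullet> y = b j \<longrightarrow> a j \<bullet> v = 0"
  shows "inner (x - y) v = 0"
proof -
  have yin: "y \<in> polyh a b" unfolding y_def
    by (rule closest_point_in_set[OF closed_polyh polyh_ne[OF c]])
  have "\<forall>j. \<forall>\<^sub>F e in at_right (0::real). e * \<bar>a j \<bullet> v\<bar> \<le> a j \<bullet> y - b j"
  proof
    fix j
    show "\<forall>\<^sub>F e in at_right (0::real). e * \<bar>a j \<bullet> v\<bar> \<le> a j \<bullet> y - b j"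
    proof (cases "a j \<bullet> y = b j")
      case True then show ?thesis using v by simp
    next
      case False
      have "b j \<le> a j \<bullet> y" using yin unfolding polyh_def by blast
      then have pos: "a j \<bullet> y - b j > 0" using False by linarith
      have "((\<lambda>e. e * \<bar>a j \<bullet> v\<bar>) \<longlongrightarrow> 0 * \<bar>a j \<bullet> v\<bar>) (at_right 0)"
        by (intro tendsto_intros)
      then have "\<forall>\<^sub>F e in at_right (0::real). e * \<bar>a j \<bullet> v\<bar> < a j \<bullet> y - b j"
        using order_tendstoD(2)[OF _ pos] by simp
      then show ?thesis by (auto elim: eventually_mono)
    qed
  qed
  then have "\<forall>\<^sub>F e in at_right (0::real). \<forall>j. e * \<bar>a j \<bullet> v\<bar> \<le> a j \<bullet> y - b j"
    by (simp add: eventually_all_finite)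
  moreover have "\<forall>\<^sub>F e in at_right (0::real). e > 0" by (simp add: eventually_at_right_less)
  ultimately have "\<forall>\<^sub>F e in at_right (0::real). e > 0 \<and> (\<forall>j. e * \<bar>a j \<bullet> v\<bar> \<le> a j \<bullet> y - b j)"
    by (auto elim: eventually_elim2)
  then obtain e where e: "e > 0" "\<forall>j. e * \<bar>a j \<bullet> v\<bar> \<le> a j \<bullet> y - b j"
    using eventually_happens[of _ "at_right (0::real)"] by auto
  have in1: "y + e *\<^sub>R v \<in> polyh a b" and in2: "y - e *\<^sub>R v \<in> polyh a b"
  proof -
    { fix j
      have h: "e * \<bar>a j \<bullet> v\<bar> \<le> a j \<bullet> y - b j" using e by auto
      have "\<bar>e * (a j \<bullet> v)\<bar> = e * \<bar>a j \<bullet> v\<bar>" using e by (simp add: abs_mult)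
      then have "b j \<le> a j \<bullet> (y + e *\<^sub>R v)" "b j \<le> a j \<bullet> (y - e *\<^sub>R v)"
        using h by (auto simp: inner_add_right inner_diff_right) }
    then show "y + e *\<^sub>R v \<in> polyh a b" "y - e *\<^sub>R v \<in> polyh a b" unfolding polyh_def by auto
  qed
  have "inner (x - y) ((y + e *\<^sub>R v) - y) \<le> 0"
    unfolding y_def by (rule closest_point_dot[OF convex_poly closed_polyh in1[unfolded y_def]])
  moreover have "inner (x - y) ((y - e *\<^sub>R v) - y) \<le> 0"
    unfolding y_def by (rule closest_point_dot[OF convex_poly closed_polyh in2[unfolded y_def]])
  ultimately show ?thesis using e(1)
    by (simp add: inner_scaleR_right)
qed



lemma active_bound1:
  fixes a :: "'n::finite \<Rightarrow> 'v::euclidean_space" and A :: "'n set"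
  shows "\<exists>e>0. \<forall>z. (\<forall>v. (\<forall>j\<in>A. a j \<bullet> v = 0) \<longrightarrow> z \<bullet> v = 0) \<longrightarrow> e * norm z \<le> (\<Sum>j\<in>A. \<bar>a j \<bullet> z\<bar>)"
proof -
  define S where "S = {z::'v. \<forall>v. (\<forall>j\<in>A. a j \<bullet> v = 0) \<longrightarrow> z \<bullet> v = 0}"
  define f where "f = (\<lambda>z::'v. \<chi> j::'n. if j \<in> A then a j \<bullet> z else 0)"
  have "S = (\<Inter>v\<in>{v. \<forall>j\<in>A. a j \<bullet> v = 0}. {z. inner v z = 0})"
    unfolding S_def by (auto simp: inner_commute)
  then have cl: "closed S" by (auto intro!: closed_INT closed_hyperplane)
  have sub: "subspace S" unfolding subspace_def S_def by (auto simp: inner_add_left)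
  have lin: "linear f" unfolding f_def
    by (rule linearI) (auto simp: vec_eq_iff inner_add_right)
  have bl: "bounded_linear f" using lin linear_conv_bounded_linear by blast
  have inj: "\<forall>x\<in>S. f x = 0 \<longrightarrow> x = 0"
  proof (intro ballI impI)
    fix x assume x: "x \<in> S" "f x = 0"
    then have "\<forall>j\<in>A. a j \<bullet> x = 0" unfolding f_def by (auto simp: vec_eq_iff) (metis (full_types))
    then have "x \<bullet> x = 0" using x(1) unfolding S_def by blast
    then show "x = 0" by simp
  qed
  obtain e where e: "e > 0" "\<forall>x\<in>S. norm (f x) \<ge> e * norm x"
    using injective_imp_isometric[OF cl sub bl inj] by blast
  have "norm (f z) \<le> (\<Sum>j\<in>A. \<bar>a j \<bullet> z\<bar>)" for z
  proof -
    have "norm (f z) \<le> (\<Sum>j\<in>UNIV. \<bar>f z $ j\<bar>)" by (rule norm_le_l1_cart)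
    also have "\<dots> = (\<Sum>j\<in>UNIV. if j \<in> A then \<bar>a j \<bullet> z\<bar> else 0)"
      unfolding f_def by (intro sum.cong) auto
    also have "\<dots> = (\<Sum>j\<in>A. \<bar>a j \<bullet> z\<bar>)" by (simp add: sum.If_cases)
    finally show ?thesis .
  qed
  note nb = this
  have "e * norm z \<le> (\<Sum>j\<in>A. \<bar>a j \<bullet> z\<bar>)" if "\<forall>v. (\<forall>j\<in>A. a j \<bullet> v = 0) \<longrightarrow> z \<bullet> v = 0" for z
  proof -
    have "z \<in> S" using that unfolding S_def by blast
    then have "e * norm z \<le> norm (f z)" using e(2) by blast
    then show ?thesis using nb[of z] by linarith
  qed
  then show ?thesis using e(1) by blast
qed

lemma active_bound:
  fixes a :: "'n::finite \<Rightarrow> 'v::euclidean_space"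
  shows "\<exists>e>0. \<forall>A z. (\<forall>v. (\<forall>j\<in>A. a j \<bullet> v = 0) \<longrightarrow> z \<bullet> v = 0) \<longrightarrow> e * norm z \<le> (\<Sum>j\<in>A. \<bar>a j \<bullet> z\<bar>)"
proof -
  have "\<forall>A. \<exists>e>0. \<forall>z. (\<forall>v. (\<forall>j\<in>A. a j \<bullet> v = 0) \<longrightarrow> z \<bullet> v = 0) \<longrightarrow> e * norm z \<le> (\<Sum>j\<in>A. \<bar>a j \<bullet> z\<bar>)"
    using active_bound1 by blast
  then obtain E where E: "\<And>A. E A > 0" "\<And>A z. (\<forall>v. (\<forall>j\<in>A. a j \<bullet> v = 0) \<longrightarrow> z \<bullet> v = 0) \<longrightarrow> E A * norm z \<le> (\<Sum>j\<in>A. \<bar>a j \<bullet> z\<bar>)"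
    by metis
  define e where "e = Min (range E)"
  have fin: "finite (range E)" by simp
  have epos: "e > 0" unfolding e_def using E(1) fin by (subst Min_gr_iff) auto
  have "e \<le> E A" for A unfolding e_def using fin by simp
  then have "e * norm z \<le> E A * norm z" for A z by (simp add: mult_right_mono)
  then show ?thesis using epos E(2) by (meson order_trans)
qed

lemma piecewise_lip:
  fixes g :: "real \<Rightarrow> 'v::real_normed_vector"
  assumes cont: "continuous_on UNIV g"
  shows "finite F \<Longrightarrow> (\<forall>T\<in>F. closed T \<and> (\<forall>t\<in>T. \<forall>s\<in>T. norm (g t - g s) \<le> K * \<bar>t - s\<bar>))
     \<Longrightarrow> a \<le> b \<Longrightarrow> {a..b} \<subseteq> \<Union>F \<Longrightarrow> norm (g b - g a) \<le> K * (b - a)"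
proof (induction "card F" arbitrary: F a rule: less_induct)
  case less
  obtain T where T: "T \<in> F" "a \<in> T" using less.prems by auto
  define t where "t = Sup (T \<inter> {a..b})"
  have ne: "T \<inter> {a..b} \<noteq> {}" using T less.prems by auto
  have bdd: "bdd_above (T \<inter> {a..b})" by (rule bdd_aboveI[of _ b]) auto
  have clT: "closed (T \<inter> {a..b})" using less.prems T by auto
  have tin: "t \<in> T \<inter> {a..b}" unfolding t_def by (rule closed_contains_Sup[OF ne bdd clT])
  have lipT: "\<forall>t\<in>T. \<forall>s\<in>T. norm (g t - g s) \<le> K * \<bar>t - s\<bar>" using less.prems T by auto
  have ta: "norm (g t - g a) \<le> K * (t - a)" using lipT tin T(2) by force
  show ?case
  proof (cases "t = b")
    case True then show ?thesis using ta by simp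
  next
    case False
    then have tb: "t < b" using tin by auto
    have above: "s \<notin> T" if "t < s" "s \<le> b" for s
    proof
      assume "s \<in> T"
      then have "s \<le> t" unfolding t_def using that tin bdd by (intro cSup_upper) auto
      then show False using that by simp
    qed
    have IH: "norm (g b - g s) \<le> K * (b - s)" if "t < s" "s \<le> b" for s
    proof -
      have "card (F - {T}) < card F" using T less.prems(1) by (meson card_Diff1_less)
      moreover have "{s..b} \<subseteq> \<Union>(F - {T})"
      proof
        fix r assume r: "r \<in> {s..b}"
        then have "r \<in> {a..b}" using that tin by auto
        then have "r \<in> \<Union>F" using less.prems(4) by blast
        moreover have "r \<notin> T" using above[of r] r that by auto
        ultimately show "r \<in> \<Union>(F - {T})" by auto
      qed
      ultimately show ?thesis using less.hyps[of "F - {T}" s] less.prems that by auto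
    qed
    have lim: "((\<lambda>s. norm (g b - g s) - K * (b - s)) \<longlongrightarrow> norm (g b - g t) - K * (b - t)) (at_right t)"
    proof -
      have "isCont g t" using cont by (simp add: continuous_on_eq_continuous_at)
      then have "(g \<longlongrightarrow> g t) (at t)" by (simp add: isCont_def)
      then have "(g \<longlongrightarrow> g t) (at_right t)" by (rule tendsto_mono[OF at_le, rotated]) auto
      then show ?thesis by (intro tendsto_intros)
    qed
    have ev: "\<forall>\<^sub>F s in at_right t. norm (g b - g s) - K * (b - s) \<le> 0"
      unfolding eventually_at_right[OF tb] using IH tb by (intro exI[of _ b]) force
    have "norm (g b - g t) - K * (b - t) \<le> 0"
      by (rule tendsto_upperbound[OF lim ev]) simp
    then have "norm (g b - g a) \<le> K * (b - t) + K * (t - a)"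
      using ta norm_triangle_ineq[of "g b - g t" "g t - g a"] by simp
    then show ?thesis by (simp add: algebra_simps)
  qed
qed

lemma closure_lip:
  fixes g :: "real \<Rightarrow> 'v::real_normed_vector"
  assumes cont: "continuous_on UNIV g" and lip: "\<forall>t\<in>S. \<forall>s\<in>S. norm (g t - g s) \<le> K * \<bar>t - s\<bar>"
  shows "\<forall>t\<in>closure S. \<forall>s\<in>closure S. norm (g t - g s) \<le> K * \<bar>t - s\<bar>"
proof -
  define H where "H = {p::real\<times>real. norm (g (fst p) - g (snd p)) \<le> K * \<bar>fst p - snd p\<bar>}"
  have "continuous_on UNIV (\<lambda>p::real\<times>real. g (fst p))"
    by (rule continuous_on_compose2[OF cont]) (auto intro!: continuous_intros)
  moreover have "continuous_on UNIV (\<lambda>p::real\<times>real. g (snd p))"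
    by (rule continuous_on_compose2[OF cont]) (auto intro!: continuous_intros)
  ultimately have "closed H" unfolding H_def
    by (intro closed_Collect_le continuous_intros) auto
  moreover have "S \<times> S \<subseteq> H" using lip unfolding H_def by auto
  ultimately have "closure (S \<times> S) \<subseteq> H" by (rule closure_minimal[rotated])
  then show ?thesis unfolding closure_Times H_def by auto
qed



lemma sq_convex_real:
  fixes u w th :: real
  assumes "0 \<le> th" "th \<le> 1"
  shows "((1 - th) * u + th * w)^2 \<le> (1 - th) * u^2 + th * w^2"
proof -
  have "(1 - th) * u^2 + th * w^2 - ((1 - th) * u + th * w)^2 = th * (1 - th) * (u - w)^2"
    by (simp add: power2_eq_square algebra_simps)
  moreover have "th * (1 - th) * (u - w)^2 \<ge> 0" using assms by simp
  ultimately show ?thesis by linarith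
qed

lemma proj_path_cont:
  fixes a :: "'n::finite \<Rightarrow> 'v::euclidean_space"
  assumes c: "\<forall>j. 1 \<le> a j \<bullet> c"
  shows "continuous_on UNIV (\<lambda>t. closest_point (polyh a (\<lambda>j. b j + t * d j)) x)"
proof -
  define g where "g t = closest_point (polyh a (\<lambda>j. b j + t * d j)) x" for t
  define \<phi> where "\<phi> t = (norm (x - g t))^2" for t
  have gin: "g t \<in> polyh a (\<lambda>j. b j + t * d j)" for t
    unfolding g_def by (rule closest_point_in_set[OF closed_polyh polyh_ne[OF c]])
  have mix: "(1 - th) *\<^sub>R g t + th *\<^sub>R g s \<in> polyh a (\<lambda>j. b j + ((1 - th) * t + th * s) * d j)"
    if th: "0 \<le> th" "th \<le> 1" for th t s
  proof -
    { fix j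
      have 1: "b j + t * d j \<le> a j \<bullet> g t" "b j + s * d j \<le> a j \<bullet> g s"
        using gin[of t] gin[of s] unfolding polyh_def by auto
      have "(1 - th) * (b j + t * d j) \<le> (1 - th) * (a j \<bullet> g t)"
        using 1(1) th by (intro mult_left_mono) auto
      moreover have "th * (b j + s * d j) \<le> th * (a j \<bullet> g s)"
        using 1(2) th by (intro mult_left_mono) auto
      ultimately have "b j + ((1 - th) * t + th * s) * d j \<le> a j \<bullet> ((1 - th) *\<^sub>R g t + th *\<^sub>R g s)"
        by (simp add: inner_add_right algebra_simps) }
    then show ?thesis unfolding polyh_def by auto
  qed
  have le: "\<phi> r \<le> (norm (x - z))^2" if "z \<in> polyh a (\<lambda>j. b j + r * d j)" for r z
  proof -
    have "dist x (g r) \<le> dist x z" unfolding g_def by (rule closest_point_le[OF closed_polyh that])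
    then show ?thesis unfolding \<phi>_def dist_norm by (simp add: power_mono)
  qed
  have conv: "convex_on UNIV \<phi>"
  proof (rule convex_onI)
    fix th t s :: real assume th: "0 < th" "th < 1"
    have "\<phi> ((1 - th) *\<^sub>R t + th *\<^sub>R s) \<le> (norm (x - ((1 - th) *\<^sub>R g t + th *\<^sub>R g s)))^2"
      using le mix[of th t s] th by simp
    also have "x - ((1 - th) *\<^sub>R g t + th *\<^sub>R g s) = (1 - th) *\<^sub>R (x - g t) + th *\<^sub>R (x - g s)"
      by (simp add: algebra_simps)
    also have "(norm \<dots>)^2 \<le> ((1 - th) * norm (x - g t) + th * norm (x - g s))^2"
    proof -
      have "norm ((1 - th) *\<^sub>R (x - g t) + th *\<^sub>R (x - g s)) \<le> (1 - th) * norm (x - g t) + th * norm (x - g s)"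
        using norm_triangle_ineq[of "(1 - th) *\<^sub>R (x - g t)" "th *\<^sub>R (x - g s)"] th by simp
      then show ?thesis by (simp add: power_mono)
    qed
    also have "\<dots> \<le> (1 - th) * \<phi> t + th * \<phi> s"
      unfolding \<phi>_def using sq_convex_real th by simp
    finally show "\<phi> ((1 - th) *\<^sub>R t + th *\<^sub>R s) \<le> (1 - th) * \<phi> t + th * \<phi> s" .
  qed simp
  have cphi: "continuous_on UNIV \<phi>" by (rule convex_on_continuous[OF open_UNIV conv])
  have key: "(norm (g s - g t))^2 \<le> 2 * \<phi> s + 2 * \<phi> t - 4 * \<phi> ((s + t) / 2)" for s t
  proof -
    have "(1 - 1/2) *\<^sub>R g s + (1/2) *\<^sub>R g t \<in> polyh a (\<lambda>j. b j + ((s + t) / 2) * d j)"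
      using mix[of "1/2" s t] by (simp add: field_simps)
    then have m: "\<phi> ((s + t) / 2) \<le> (norm (x - ((1/2) *\<^sub>R g s + (1/2) *\<^sub>R g t)))^2"
      using le by simp
    define u where "u = x - g s"
    define w where "w = x - g t"
    have e1: "x - ((1/2) *\<^sub>R g s + (1/2) *\<^sub>R g t) = (1/2) *\<^sub>R (u + w)"
    proof -
      have hx: "x = (1/2) *\<^sub>R x + (1/2) *\<^sub>R x" by (simp flip: scaleR_add_left)
      show ?thesis unfolding u_def w_def by (subst (1) hx) (simp add: algebra_simps)
    qed
    have e2: "g s - g t = w - u" unfolding u_def w_def by simp
    have "(norm ((1/2) *\<^sub>R (u + w)))^2 = (1/2) * (norm u)^2 + (1/2) * (norm w)^2 - (1/4) * (norm (w - u))^2"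
      by (simp add: power2_norm_eq_inner inner_add_left inner_add_right inner_diff_left inner_diff_right inner_commute algebra_simps)
    then show ?thesis using m unfolding e1 e2 \<phi>_def u_def[symmetric] w_def[symmetric] by simp
  qed
  have "isCont g t" for t
  proof -
    have ic: "isCont \<phi> z" for z using cphi by (simp add: continuous_on_eq_continuous_at)
    have "((\<lambda>s. (s + t) / 2) \<longlongrightarrow> (t + t) / 2) (at t)" by (intro tendsto_intros) simp
    then have "((\<lambda>s. \<phi> ((s + t) / 2)) \<longlongrightarrow> \<phi> ((t + t) / 2)) (at t)"
      by (rule isCont_tendsto_compose[OF ic])
    moreover have "(\<phi> \<longlongrightarrow> \<phi> t) (at t)" using ic[of t] by (simp add: isCont_def)
    ultimately have "((\<lambda>s. 2 * \<phi> s + 2 * \<phi> t - 4 * \<phi> ((s + t) / 2)) \<longlongrightarrow> 2 * \<phi> t + 2 * \<phi> t - 4 * \<phi> ((t + t) / 2)) (at t)"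
      by (intro tendsto_intros)
    then have h: "((\<lambda>s. 2 * \<phi> s + 2 * \<phi> t - 4 * \<phi> ((s + t) / 2)) \<longlongrightarrow> 0) (at t)" by simp
    have "((\<lambda>s. (norm (g s - g t))^2) \<longlongrightarrow> 0) (at t)"
      by (rule tendsto_sandwich[OF _ _ tendsto_const h]) (auto simp: key)
    then have "((\<lambda>s. sqrt ((norm (g s - g t))^2)) \<longlongrightarrow> sqrt 0) (at t)" by (rule tendsto_real_sqrt)
    then have "((\<lambda>s. norm (g s - g t)) \<longlongrightarrow> 0) (at t)" by simp
    then have "((\<lambda>s. g s - g t) \<longlongrightarrow> 0) (at t)" by (simp add: tendsto_norm_zero_iff)
    then show ?thesis unfolding isCont_def by (simp add: LIM_zero_iff)
  qed
  then show ?thesis unfolding g_def by (simp add: continuous_on_eq_continuous_at)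
qed

lemma polyh_lip:
  fixes a :: "'n::finite \<Rightarrow> 'v::euclidean_space"
  assumes c: "\<forall>j. 1 \<le> a j \<bullet> c"
  shows "\<exists>K\<ge>0. \<forall>x b b'. norm (closest_point (polyh a b') x - closest_point (polyh a b) x) \<le> K * (\<Sum>j\<in>UNIV. \<bar>b' j - b j\<bar>)"
proof -
  obtain e where e: "e > 0" "\<forall>A z. (\<forall>v. (\<forall>j\<in>A. a j \<bullet> v = 0) \<longrightarrow> z \<bullet> v = 0) \<longrightarrow> e * norm z \<le> (\<Sum>j\<in>A. \<bar>a j \<bullet> z\<bar>)"
    using active_bound by blast
  have "norm (closest_point (polyh a b') x - closest_point (polyh a b) x) \<le> (1/e) * (\<Sum>j\<in>UNIV. \<bar>b' j - b j\<bar>)" for x b b'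
  proof -
    define d where "d j = b' j - b j" for j
    define D where "D = (\<Sum>j\<in>UNIV. \<bar>d j\<bar>)"
    define g where "g t = closest_point (polyh a (\<lambda>j. b j + t * d j)) x" for t
    define act where "act t = {j. a j \<bullet> g t = b j + t * d j}" for t
    have cont: "continuous_on UNIV g" unfolding g_def by (rule proj_path_cont[OF c])
    have piece: "norm (g t - g s) \<le> (D / e) * \<bar>t - s\<bar>" if ts: "act t = act s" for t s
    proof -
      have orth: "(g t - g s) \<bullet> v = 0" if v: "\<forall>j\<in>act t. a j \<bullet> v = 0" for v
      proof -
        have 1: "inner (x - g t) v = 0" unfolding g_def
          by (rule proj_orth[OF c]) (use v in \<open>auto simp: act_def g_def\<close>)
        have 2: "inner (x - g s) v = 0" unfolding g_def
          by (rule proj_orth[OF c]) (use v ts in \<open>auto simp: act_def g_def\<close>)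
        have "(g t - g s) \<bullet> v = inner (x - g s) v - inner (x - g t) v"
          by (simp add: inner_diff_left)
        then show ?thesis using 1 2 by simp
      qed
      have "e * norm (g t - g s) \<le> (\<Sum>j\<in>act t. \<bar>a j \<bullet> (g t - g s)\<bar>)" using e(2) orth by blast
      also have "\<dots> = (\<Sum>j\<in>act t. \<bar>t - s\<bar> * \<bar>d j\<bar>)"
      proof (rule sum.cong)
        fix j assume j: "j \<in> act t"
        then have "a j \<bullet> g t = b j + t * d j" "a j \<bullet> g s = b j + s * d j"
          using ts unfolding act_def by auto
        then have "a j \<bullet> (g t - g s) = (t - s) * d j" by (simp add: inner_diff_right algebra_simps)
        then show "\<bar>a j \<bullet> (g t - g s)\<bar> = \<bar>t - s\<bar> * \<bar>d j\<bar>" by (simp add: abs_mult)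
      qed simp
      also have "\<dots> \<le> (\<Sum>j\<in>UNIV. \<bar>t - s\<bar> * \<bar>d j\<bar>)" by (rule sum_mono2) auto
      also have "\<dots> = \<bar>t - s\<bar> * D" unfolding D_def by (simp add: sum_distrib_left)
      finally have "e * norm (g t - g s) \<le> \<bar>t - s\<bar> * D" .
      then show ?thesis using e(1) by (simp add: field_simps)
    qed
    define F where "F = (\<lambda>A. closure {t. act t = A}) ` UNIV"
    have finF: "finite F" unfolding F_def by simp
    have Fprop: "\<forall>T\<in>F. closed T \<and> (\<forall>t\<in>T. \<forall>s\<in>T. norm (g t - g s) \<le> (D / e) * \<bar>t - s\<bar>)"
    proof
      fix T assume "T \<in> F"
      then obtain A where A: "T = closure {t. act t = A}" unfolding F_def by auto
      have "\<forall>t\<in>{t. act t = A}. \<forall>s\<in>{t. act t = A}. norm (g t - g s) \<le> (D / e) * \<bar>t - s\<bar>"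
        using piece by auto
      then show "closed T \<and> (\<forall>t\<in>T. \<forall>s\<in>T. norm (g t - g s) \<le> (D / e) * \<bar>t - s\<bar>)"
        unfolding A using closure_lip[OF cont] by blast
    qed
    have cover: "{0..1} \<subseteq> \<Union>F"
    proof
      fix t :: real assume "t \<in> {0..1}"
      have "t \<in> closure {s. act s = act t}" by (rule closure_subset[THEN subsetD]) simp
      then show "t \<in> \<Union>F" unfolding F_def by blast
    qed
    have "norm (g 1 - g 0) \<le> (D / e) * (1 - 0)"
      by (rule piecewise_lip[OF cont finF Fprop _ cover]) simp
    moreover have "g 1 = closest_point (polyh a b') x" unfolding g_def d_def by simp
    moreover have "g 0 = closest_point (polyh a b) x" unfolding g_def by simp
    ultimately show ?thesis unfolding D_def d_def by simp
  qed
  then show ?thesis using e(1) by (intro exI[of _ "1/e"]) auto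
qed



definition pobj :: "('n::finite \<Rightarrow> 'v::euclidean_space) \<Rightarrow> real \<Rightarrow> 'v \<Rightarrow> 'v \<Rightarrow> real" where
  "pobj a lam w0 w = (\<Sum>j\<in>UNIV. exp (- (a j \<bullet> w))) + lam / 2 * (norm (w - w0))^2"

definition kkt :: "('n::finite \<Rightarrow> 'v::euclidean_space) \<Rightarrow> real \<Rightarrow> 'v \<Rightarrow> 'v \<Rightarrow> bool" where
  "kkt a lam w0 w \<longleftrightarrow> lam *\<^sub>R (w - w0) = (\<Sum>j\<in>UNIV. exp (- (a j \<bullet> w)) *\<^sub>R a j)"

lemma kkt_min:
  fixes a :: "'n::finite \<Rightarrow> 'v::euclidean_space"
  assumes lam: "lam > 0" and k: "kkt a lam w0 w"
  shows "pobj a lam w0 v \<ge> pobj a lam w0 w + lam / 2 * (norm (v - w))^2"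
proof -
  have e: "exp (- (a j \<bullet> v)) \<ge> exp (- (a j \<bullet> w)) - exp (- (a j \<bullet> w)) * (a j \<bullet> (v - w))" for j
  proof -
    have "exp (- (a j \<bullet> v)) = exp (- (a j \<bullet> w)) * exp (- (a j \<bullet> (v - w)))"
      by (simp add: exp_add[symmetric] inner_diff_right)
    moreover have "exp (- (a j \<bullet> (v - w))) \<ge> 1 - a j \<bullet> (v - w)"
      using exp_ge_add_one_self[of "- (a j \<bullet> (v - w))"] by simp
    ultimately show ?thesis
      using mult_left_mono[of "1 - a j \<bullet> (v - w)" "exp (- (a j \<bullet> (v - w)))" "exp (- (a j \<bullet> w))"]
      by (simp add: algebra_simps)
  qed
  have "(\<Sum>j\<in>UNIV. exp (- (a j \<bullet> v))) \<ge> (\<Sum>j\<in>UNIV. exp (- (a j \<bullet> w)) - exp (- (a j \<bullet> w)) * (a j \<bullet> (v - w)))"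
    by (rule sum_mono) (use e in auto)
  also have "(\<Sum>j\<in>UNIV. exp (- (a j \<bullet> w)) - exp (- (a j \<bullet> w)) * (a j \<bullet> (v - w)))
      = (\<Sum>j\<in>UNIV. exp (- (a j \<bullet> w))) - (\<Sum>j\<in>UNIV. exp (- (a j \<bullet> w)) *\<^sub>R a j) \<bullet> (v - w)"
    by (simp add: sum_subtractf inner_sum_left)
  also have "(\<Sum>j\<in>UNIV. exp (- (a j \<bullet> w)) *\<^sub>R a j) = lam *\<^sub>R (w - w0)" using k unfolding kkt_def by simp
  finally have s: "(\<Sum>j\<in>UNIV. exp (- (a j \<bullet> v))) \<ge> (\<Sum>j\<in>UNIV. exp (- (a j \<bullet> w))) - lam * ((w - w0) \<bullet> (v - w))"
    by simp
  have n: "(norm (v - w0))^2 = (norm (w - w0))^2 + 2 * ((w - w0) \<bullet> (v - w)) + (norm (v - w))^2"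
  proof -
    have gen: "(norm (p + q))^2 = (norm p)^2 + 2 * (p \<bullet> q) + (norm q)^2" for p q :: 'v
      unfolding power2_norm_eq_inner by (simp add: inner_add_left inner_add_right inner_commute)
    have "v - w0 = (w - w0) + (v - w)" by simp
    then show ?thesis using gen[of "w - w0" "v - w"] by metis
  qed
  have n': "lam / 2 * (norm (v - w0))^2 = lam / 2 * (norm (w - w0))^2 + lam * ((w - w0) \<bullet> (v - w)) + lam / 2 * (norm (v - w))^2"
    by (simp only: n) (simp add: field_simps)
  show ?thesis unfolding pobj_def using s n' by linarith
qed

lemma kkt_unique_min:
  assumes lam: "lam > 0" and k: "kkt a lam w0 w"
  shows "(THE w. \<forall>v. pobj a lam w0 w \<le> pobj a lam w0 v) = w"
proof (rule the_equality)
  show "\<forall>v. pobj a lam w0 w \<le> pobj a lam w0 v"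
  proof
    fix v
    have "lam / 2 * (norm (v - w))^2 \<ge> 0" using lam by simp
    then show "pobj a lam w0 w \<le> pobj a lam w0 v" using kkt_min[OF lam k, of v] by linarith
  qed
next
  fix w' assume "\<forall>v. pobj a lam w0 w' \<le> pobj a lam w0 v"
  then have "pobj a lam w0 w' \<le> pobj a lam w0 w" by blast
  then have "lam / 2 * (norm (w' - w))^2 \<le> 0" using kkt_min[OF lam k, of w'] by simp
  then have "(norm (w' - w))^2 \<le> 0" using lam by (simp add: mult_le_0_iff)
  then show "w' = w" by simp
qed

lemma kkt_exists:
  fixes a :: "'n::finite \<Rightarrow> 'v::euclidean_space"
  assumes lam: "lam > 0"
  shows "\<exists>w. kkt a lam w0 w"
proof -
  define f where "f = pobj a lam w0"
  have fge: "f v \<ge> lam / 2 * (norm (v - w0))^2" for v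
    unfolding f_def pobj_def by (simp add: sum_nonneg)
  have f0: "f w0 \<ge> 0" unfolding f_def pobj_def by (simp add: sum_nonneg)
  define r where "r = sqrt (2 * f w0 / lam) + 1"
  have cont: "continuous_on (cball w0 r) f" unfolding f_def pobj_def by (intro continuous_intros)
  have "r > 0" unfolding r_def using f0 lam by (simp add: add_nonneg_pos)
  then have "cball w0 r \<noteq> {}" by simp
  then obtain w where w: "w \<in> cball w0 r" "\<forall>y\<in>cball w0 r. f w \<le> f y"
    using continuous_attains_inf[OF compact_cball _ cont] by blast
  have glob: "f w \<le> f v" for v
  proof (cases "v \<in> cball w0 r")
    case True then show ?thesis using w by blast
  next
    case False
    then have d: "norm (v - w0) > r" by (simp add: dist_norm norm_minus_commute)
    have "sqrt (2 * f w0 / lam) < norm (v - w0)" using d unfolding r_def by simp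
    then have "(sqrt (2 * f w0 / lam))^2 < (norm (v - w0))^2"
      using f0 lam by (intro power_strict_mono) auto
    then have "2 * f w0 / lam < (norm (v - w0))^2" using f0 lam by simp
    then have "f w0 < lam / 2 * (norm (v - w0))^2" using lam by (simp add: field_simps)
    moreover have "f w \<le> f w0" using w \<open>r > 0\<close> by simp
    ultimately show ?thesis using fge[of v] by linarith
  qed
  define h where "h = lam *\<^sub>R (w - w0) - (\<Sum>j\<in>UNIV. exp (- (a j \<bullet> w)) *\<^sub>R a j)"
  define \<phi> where "\<phi> t = (\<Sum>j\<in>UNIV. exp (- (a j \<bullet> w) - t * (a j \<bullet> h))) + lam / 2 *
      ((norm (w - w0))^2 + 2 * t * ((w - w0) \<bullet> h) + t^2 * (norm h)^2)" for t
  have phi: "\<phi> t = f (w + t *\<^sub>R h)" for t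
  proof -
    have "(norm (w + t *\<^sub>R h - w0))^2 = (norm (w - w0))^2 + 2 * t * ((w - w0) \<bullet> h) + t^2 * (norm h)^2"
    proof -
      have "w + t *\<^sub>R h - w0 = (w - w0) + t *\<^sub>R h" by simp
      then show ?thesis unfolding power2_norm_eq_inner
        by (simp add: inner_add_left inner_add_right inner_commute power2_eq_square algebra_simps)
    qed
    note nrm = this
    have s1: "(\<Sum>j\<in>UNIV. exp (- (a j \<bullet> w) - t * (a j \<bullet> h))) = (\<Sum>j\<in>UNIV. exp (- (a j \<bullet> (w + t *\<^sub>R h))))"
      by (simp add: inner_add_right algebra_simps)
    show ?thesis unfolding \<phi>_def f_def pobj_def s1 nrm[symmetric] by simp
  qed
  have der: "DERIV \<phi> 0 :> (\<Sum>j\<in>UNIV. exp (- (a j \<bullet> w) - 0 * (a j \<bullet> h)) * (- (a j \<bullet> h))) + lam / 2 * (2 * ((w - w0) \<bullet> h) + 2 * 0 * (norm h)^2)"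
    unfolding \<phi>_def by (auto intro!: derivative_eq_intros)
  have "\<forall>y. \<bar>0 - y\<bar> < 1 \<longrightarrow> \<phi> 0 \<le> \<phi> y" unfolding phi using glob by simp
  then have z: "(\<Sum>j\<in>UNIV. exp (- (a j \<bullet> w) - 0 * (a j \<bullet> h)) * (- (a j \<bullet> h))) + lam / 2 * (2 * ((w - w0) \<bullet> h) + 2 * 0 * (norm h)^2) = 0"
    using DERIV_local_min[OF der, of 1] by simp
  have "(\<Sum>j\<in>UNIV. exp (- (a j \<bullet> w) - 0 * (a j \<bullet> h)) * (- (a j \<bullet> h))) = - ((\<Sum>j\<in>UNIV. exp (- (a j \<bullet> w)) *\<^sub>R a j) \<bullet> h)"
    by (simp add: inner_sum_left sum_negf)
  with z have "h \<bullet> h = 0" unfolding h_def by (simp add: inner_diff_left algebra_simps)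
  then have "h = 0" by simp
  then show ?thesis unfolding kkt_def h_def by auto
qed

lemma kkt_nonexp:
  assumes lam: "lam > 0" and k1: "kkt a lam w0 w" and k2: "kkt a lam w0' w'"
  shows "norm (w - w') \<le> norm (w0 - w0')"
proof -
  have eq: "lam *\<^sub>R (w - w') = lam *\<^sub>R (w0 - w0') + (\<Sum>j\<in>UNIV. (exp (- (a j \<bullet> w)) - exp (- (a j \<bullet> w'))) *\<^sub>R a j)"
    using k1 k2 unfolding kkt_def
    by (simp add: sum_subtractf scaleR_diff_left algebra_simps)
  have "lam * ((w - w') \<bullet> (w - w')) = lam * ((w0 - w0') \<bullet> (w - w')) + (\<Sum>j\<in>UNIV. (exp (- (a j \<bullet> w)) - exp (- (a j \<bullet> w'))) * (a j \<bullet> w - a j \<bullet> w'))"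
  proof -
    have "lam * ((w - w') \<bullet> (w - w')) = (lam *\<^sub>R (w - w')) \<bullet> (w - w')" by simp
    also have "\<dots> = lam * ((w0 - w0') \<bullet> (w - w')) + (\<Sum>j\<in>UNIV. (exp (- (a j \<bullet> w)) - exp (- (a j \<bullet> w'))) * (a j \<bullet> (w - w')))"
      unfolding eq by (simp add: inner_add_left inner_sum_left)
    finally show ?thesis by (simp add: inner_diff_right)
  qed
  moreover have "(exp (- (a j \<bullet> w)) - exp (- (a j \<bullet> w'))) * (a j \<bullet> w - a j \<bullet> w') \<le> 0" for j
  proof (cases "a j \<bullet> w \<le> a j \<bullet> w'")
    case True then show ?thesis by (simp add: mult_le_0_iff)
  next
    case False then show ?thesis by (simp add: mult_le_0_iff)
  qed
  then have "(\<Sum>j\<in>UNIV. (exp (- (a j \<bullet> w)) - exp (- (a j \<bullet> w'))) * (a j \<bullet> w - a j \<bullet> w')) \<le> 0"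
    by (simp add: sum_nonpos)
  ultimately have "lam * ((w - w') \<bullet> (w - w')) \<le> lam * ((w0 - w0') \<bullet> (w - w'))" by linarith
  then have "(w - w') \<bullet> (w - w') \<le> (w0 - w0') \<bullet> (w - w')" using lam by simp
  also have "\<dots> \<le> norm (w0 - w0') * norm (w - w')" by (rule norm_cauchy_schwarz)
  finally have "norm (w - w') * norm (w - w') \<le> norm (w0 - w0') * norm (w - w')"
    by (simp add: dot_square_norm power2_eq_square)
  then show ?thesis
    by (cases "norm (w - w') = 0") (auto simp: mult_le_cancel_right)
qed



lemma scaled_proj:
  fixes a :: "'n::finite \<Rightarrow> 'v::euclidean_space"
  assumes c: "\<forall>j. 1 \<le> a j \<bullet> c" and L: "L > 0"
  shows "closest_point (polyh a (\<lambda>_. L)) (L *\<^sub>R u) = L *\<^sub>R closest_point (polyh a (\<lambda>_. 1)) u"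
proof (rule closest_point_char[OF convex_poly closed_polyh])
  define p where "p = closest_point (polyh a (\<lambda>_. 1)) u"
  have pin: "p \<in> polyh a (\<lambda>_. 1)" unfolding p_def
    by (rule closest_point_in_set[OF closed_polyh polyh_ne[OF c]])
  then show "L *\<^sub>R p \<in> polyh a (\<lambda>_. L)" using L unfolding polyh_def
    by (auto simp: mult_le_cancel_left1)
  show "\<forall>z\<in>polyh a (\<lambda>_. L). (L *\<^sub>R u - L *\<^sub>R p) \<bullet> (z - L *\<^sub>R p) \<le> 0"
  proof
    fix z assume z: "z \<in> polyh a (\<lambda>_. L)"
    have "(1 / L) *\<^sub>R z \<in> polyh a (\<lambda>_. 1)" using z L unfolding polyh_def
      by (auto simp: field_simps)
    then have "(u - p) \<bullet> ((1 / L) *\<^sub>R z - p) \<le> 0" unfolding p_def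
      by (rule closest_point_dot[OF convex_poly closed_polyh])
    moreover have "(L *\<^sub>R u - L *\<^sub>R p) \<bullet> (z - L *\<^sub>R p) = (L * L) * ((u - p) \<bullet> ((1 / L) *\<^sub>R z - p))"
    proof -
      have "z - L *\<^sub>R p = L *\<^sub>R ((1 / L) *\<^sub>R z - p)" using L by (simp add: algebra_simps)
      then show ?thesis by (simp add: scaleR_diff_right[symmetric])
    qed
    ultimately show "(L *\<^sub>R u - L *\<^sub>R p) \<bullet> (z - L *\<^sub>R p) \<le> 0"
      using L by (simp add: mult_nonneg_nonpos)
  qed
qed

lemma one_step:
  fixes a :: "'n::finite \<Rightarrow> 'v::euclidean_space"
  assumes c: "\<forall>j. 1 \<le> a j \<bullet> c" and R: "R \<ge> 0"
  shows "\<exists>K. \<forall>L u w. L \<ge> exp 1 \<longrightarrow> norm u \<le> R \<longrightarrow> kkt a (exp (- L)) (L *\<^sub>R u) w \<longrightarrow>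
           norm (w - L *\<^sub>R closest_point (polyh a (\<lambda>_. 1)) u) \<le> K * ln L"
proof -
  obtain Kp where Kp: "Kp \<ge> 0" "\<forall>x b b'. norm (closest_point (polyh a b') x - closest_point (polyh a b) x) \<le> Kp * (\<Sum>j\<in>UNIV. \<bar>b' j - b j\<bar>)"
    using polyh_lip[OF c] by blast
  define SA where "SA = (\<Sum>j\<in>UNIV. norm (a j))"
  define N where "N = real (card (UNIV :: 'n set))"
  define B where "B = (2 * (R + 2 * norm c) + SA) * norm c + 1"
  have SA0: "SA \<ge> 0" unfolding SA_def by (simp add: sum_nonneg)
  have B1: "B \<ge> 1" unfolding B_def using SA0 R by simp
  have lnB: "ln B \<ge> 0" using B1 by simp
  have N0: "N \<ge> 0" unfolding N_def by simp
  define K where "K = SA + Kp * N * (ln B + 1)"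
  have "norm (w - L *\<^sub>R closest_point (polyh a (\<lambda>_. 1)) u) \<le> K * ln L"
    if L: "L \<ge> exp 1" and u: "norm u \<le> R" and k: "kkt a (exp (- L)) (L *\<^sub>R u) w" for L u w
  proof -
    have lnL: "ln L \<ge> 1" using L by (metis exp_gt_zero ln_exp ln_le_cancel_iff order_less_le_trans)
    have L1: "L \<ge> 1" using L exp_ge_add_one_self[of 1] by linarith
    have Lpos: "L > 0" using L1 by simp
    have lam: "exp (- L) > 0" by simp
    define \<nu> where "\<nu> j = exp (L - a j \<bullet> w)" for j
    have \<nu>pos: "\<nu> j > 0" for j unfolding \<nu>_def by simp
    have k1: "w - L *\<^sub>R u = (\<Sum>j\<in>UNIV. \<nu> j *\<^sub>R a j)"
    proof -
      have "exp (- L) *\<^sub>R (w - L *\<^sub>R u) = (\<Sum>j\<in>UNIV. exp (- (a j \<bullet> w)) *\<^sub>R a j)"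
        using k unfolding kkt_def .
      then have "exp L *\<^sub>R (exp (- L) *\<^sub>R (w - L *\<^sub>R u)) = (\<Sum>j\<in>UNIV. (exp L * exp (- (a j \<bullet> w))) *\<^sub>R a j)"
        by (simp add: scaleR_sum_right)
      moreover have "exp L *\<^sub>R (exp (- L) *\<^sub>R (w - L *\<^sub>R u)) = w - L *\<^sub>R u"
        by (simp add: exp_minus)
      moreover have "exp L * exp (- (a j \<bullet> w)) = \<nu> j" for j
        unfolding \<nu>_def by (simp add: exp_add[symmetric])
      ultimately show ?thesis by simp
    qed
    define ws where "ws = (2 * L) *\<^sub>R c"
    define w0s where "w0s = ws - (\<Sum>j\<in>UNIV. exp (L - a j \<bullet> ws) *\<^sub>R a j)"
    have ks: "kkt a (exp (- L)) w0s ws"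
    proof -
      have "exp (- L) *\<^sub>R (ws - w0s) = (\<Sum>j\<in>UNIV. (exp (- L) * exp (L - a j \<bullet> ws)) *\<^sub>R a j)"
        unfolding w0s_def by (simp add: scaleR_sum_right)
      also have "\<dots> = (\<Sum>j\<in>UNIV. exp (- (a j \<bullet> ws)) *\<^sub>R a j)"
        by (simp add: exp_add[symmetric])
      finally show ?thesis unfolding kkt_def .
    qed
    have small: "exp (L - a j \<bullet> ws) \<le> 1" for j
    proof -
      have "a j \<bullet> ws = 2 * L * (a j \<bullet> c)" unfolding ws_def by simp
      also have "\<dots> \<ge> 2 * L" using c Lpos by (simp add: mult_le_cancel_left1)
      finally show ?thesis using Lpos by simp
    qed
    have sumsmall: "norm (\<Sum>j\<in>UNIV. exp (L - a j \<bullet> ws) *\<^sub>R a j) \<le> SA"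
    proof -
      have "norm (\<Sum>j\<in>UNIV. exp (L - a j \<bullet> ws) *\<^sub>R a j) \<le> (\<Sum>j\<in>UNIV. norm (exp (L - a j \<bullet> ws) *\<^sub>R a j))"
        by (rule norm_sum)
      also have "\<dots> \<le> SA" unfolding SA_def
      proof (rule sum_mono)
        fix j
        show "norm (exp (L - a j \<bullet> ws) *\<^sub>R a j) \<le> norm (a j)"
          using mult_right_mono[OF small[of j] norm_ge_zero[of "a j"]] by simp
      qed
      finally show ?thesis .
    qed
    have "norm (w - ws) \<le> norm (L *\<^sub>R u - w0s)" by (rule kkt_nonexp[OF lam k ks])
    also have "\<dots> \<le> norm (L *\<^sub>R u - ws) + SA"
      using sumsmall norm_triangle_ineq[of "L *\<^sub>R u - ws" "(\<Sum>j\<in>UNIV. exp (L - a j \<bullet> ws) *\<^sub>R a j)"]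
      unfolding w0s_def by (simp add: algebra_simps)
    finally have d1: "norm (w - ws) \<le> norm (L *\<^sub>R u - ws) + SA" .
    have d2: "norm (L *\<^sub>R u - ws) \<le> L * (R + 2 * norm c)"
    proof -
      have "norm (L *\<^sub>R u - ws) \<le> norm (L *\<^sub>R u) + norm ws" by (rule norm_triangle_ineq4)
      also have "\<dots> = L * norm u + 2 * L * norm c" unfolding ws_def using Lpos by simp
      also have "\<dots> \<le> L * R + 2 * L * norm c" using u Lpos by (simp add: mult_left_mono)
      finally show ?thesis by (simp add: algebra_simps)
    qed
    have wLu: "norm (w - L *\<^sub>R u) \<le> L * (2 * (R + 2 * norm c) + SA)"
    proof -
      have "norm (w - L *\<^sub>R u) \<le> norm (w - ws) + norm (ws - L *\<^sub>R u)"
        using norm_triangle_ineq[of "w - ws" "ws - L *\<^sub>R u"] by simp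
      also have "\<dots> \<le> 2 * (L * (R + 2 * norm c)) + SA" using d1 d2 by (simp add: norm_minus_commute)
      also have "\<dots> \<le> 2 * (L * (R + 2 * norm c)) + L * SA" using L1 SA0 by (simp add: mult_le_cancel_right1)
      finally show ?thesis by (simp add: algebra_simps)
    qed
    have "(\<Sum>j\<in>UNIV. \<nu> j) \<le> (\<Sum>j\<in>UNIV. \<nu> j * (a j \<bullet> c))"
    proof (rule sum_mono)
      fix j
      show "\<nu> j \<le> \<nu> j * (a j \<bullet> c)"
        using mult_left_mono[OF c[rule_format, of j] less_imp_le[OF \<nu>pos[of j]]] by simp
    qed
    also have "\<dots> = (w - L *\<^sub>R u) \<bullet> c" unfolding k1 by (simp add: inner_sum_left)
    also have "\<dots> \<le> norm (w - L *\<^sub>R u) * norm c" by (rule norm_cauchy_schwarz)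
    also have "\<dots> \<le> L * (2 * (R + 2 * norm c) + SA) * norm c" using wLu by (simp add: mult_right_mono)
    also have "\<dots> \<le> L * B" unfolding B_def using Lpos by (simp add: algebra_simps)
    finally have sumnu: "(\<Sum>j\<in>UNIV. \<nu> j) \<le> L * B" .
    have lower: "a j \<bullet> w \<ge> L - ln L - ln B" for j
    proof -
      have "\<nu> j \<le> (\<Sum>j\<in>UNIV. \<nu> j)" by (rule member_le_sum) (auto intro: less_imp_le \<nu>pos)
      then have "\<nu> j \<le> L * B" using sumnu by simp
      then have "ln (\<nu> j) \<le> ln (L * B)"
        using ln_le_cancel_iff[of "\<nu> j" "L * B"] \<nu>pos[of j] Lpos B1 by simp
      then show ?thesis unfolding \<nu>_def using Lpos B1 by (simp add: ln_mult)
    qed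
    define kept where "kept j \<longleftrightarrow> a j \<bullet> w \<le> L + ln L" for j
    define \<beta> where "\<beta> j = (if kept j then a j \<bullet> w else L)" for j
    define e where "e = (\<Sum>j\<in>UNIV. (if kept j then 0 else \<nu> j) *\<^sub>R a j)"
    have split: "L *\<^sub>R u + e - w = - (\<Sum>j\<in>UNIV. (if kept j then \<nu> j else 0) *\<^sub>R a j)"
    proof -
      have "(\<Sum>j\<in>UNIV. \<nu> j *\<^sub>R a j) = (\<Sum>j\<in>UNIV. (if kept j then \<nu> j else 0) *\<^sub>R a j) + e"
        unfolding e_def by (simp add: sum.distrib[symmetric] scaleR_add_left[symmetric]) (rule sum.cong, auto)
      then show ?thesis using k1 by (simp add: algebra_simps)
    qed
    have win: "w \<in> polyh a \<beta>"
      unfolding polyh_def \<beta>_def kept_def using lnL by auto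
    have wproj: "closest_point (polyh a \<beta>) (L *\<^sub>R u + e) = w"
    proof (rule closest_point_char[OF convex_poly closed_polyh win], rule ballI)
      fix z assume z: "z \<in> polyh a \<beta>"
      have "(L *\<^sub>R u + e - w) \<bullet> (z - w) = - (\<Sum>j\<in>UNIV. (if kept j then \<nu> j else 0) * (a j \<bullet> z - a j \<bullet> w))"
        unfolding split by (simp add: inner_sum_left inner_diff_right right_diff_distrib sum_subtractf)
      also have "\<dots> \<le> 0"
      proof -
        have "(if kept j then \<nu> j else 0) * (a j \<bullet> z - a j \<bullet> w) \<ge> 0" for j
        proof (cases "kept j")
          case True
          have "\<beta> j \<le> a j \<bullet> z" using z unfolding polyh_def by blast
          then have "a j \<bullet> w \<le> a j \<bullet> z" using True unfolding \<beta>_def by simp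
          then show ?thesis using True \<nu>pos[of j] by simp
        qed simp
        then show ?thesis by (simp add: sum_nonneg)
      qed
      finally show "(L *\<^sub>R u + e - w) \<bullet> (z - w) \<le> 0" .
    qed
    have enorm: "norm e \<le> SA"
    proof -
      have "norm e \<le> (\<Sum>j\<in>UNIV. norm ((if kept j then 0 else \<nu> j) *\<^sub>R a j))"
        unfolding e_def by (rule norm_sum)
      also have "\<dots> \<le> SA" unfolding SA_def
      proof (rule sum_mono)
        fix j
        have "(if kept j then 0 else \<nu> j) \<le> 1"
        proof (cases "kept j")
          case False
          then have "L - a j \<bullet> w < - ln L" unfolding kept_def by simp
          then have "\<nu> j < exp (- ln L)" unfolding \<nu>_def by simp
          also have "\<dots> = 1 / L" using Lpos by (simp add: exp_minus inverse_eq_divide)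
          also have "\<dots> \<le> 1" using L1 by simp
          finally show ?thesis using False by simp
        qed simp
        moreover have "(if kept j then 0 else \<nu> j) \<ge> 0" using \<nu>pos[of j] by (simp add: less_imp_le)
        ultimately have "(if kept j then 0 else \<nu> j) * norm (a j) \<le> 1 * norm (a j)"
          by (intro mult_right_mono) auto
        then show "norm ((if kept j then 0 else \<nu> j) *\<^sub>R a j) \<le> norm (a j)"
          using \<open>(if kept j then 0 else \<nu> j) \<ge> 0\<close> by simp
      qed
      finally show ?thesis .
    qed
    have bdiff: "(\<Sum>j\<in>UNIV. \<bar>\<beta> j - L\<bar>) \<le> N * (ln B + ln L)"
    proof -
      have "\<bar>\<beta> j - L\<bar> \<le> ln B + ln L" for j
        using lower[of j] lnB lnL unfolding \<beta>_def kept_def by auto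
      then have "(\<Sum>j\<in>UNIV. \<bar>\<beta> j - L\<bar>) \<le> (\<Sum>j\<in>(UNIV::'n set). ln B + ln L)"
        by (intro sum_mono) auto
      then show ?thesis unfolding N_def by simp
    qed
    have "norm (w - L *\<^sub>R closest_point (polyh a (\<lambda>_. 1)) u)
        = norm (closest_point (polyh a \<beta>) (L *\<^sub>R u + e) - closest_point (polyh a (\<lambda>_. L)) (L *\<^sub>R u))"
      unfolding wproj scaled_proj[OF c Lpos] ..
    also have "\<dots> \<le> norm (closest_point (polyh a \<beta>) (L *\<^sub>R u + e) - closest_point (polyh a \<beta>) (L *\<^sub>R u))
        + norm (closest_point (polyh a \<beta>) (L *\<^sub>R u) - closest_point (polyh a (\<lambda>_. L)) (L *\<^sub>R u))"
      using norm_triangle_ineq[of "closest_point (polyh a \<beta>) (L *\<^sub>R u + e) - closest_point (polyh a \<beta>) (L *\<^sub>R u)"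
        "closest_point (polyh a \<beta>) (L *\<^sub>R u) - closest_point (polyh a (\<lambda>_. L)) (L *\<^sub>R u)"] by simp
    also have "\<dots> \<le> norm e + Kp * (\<Sum>j\<in>UNIV. \<bar>\<beta> j - L\<bar>)"
    proof -
      have "dist (closest_point (polyh a \<beta>) (L *\<^sub>R u + e)) (closest_point (polyh a \<beta>) (L *\<^sub>R u)) \<le> dist (L *\<^sub>R u + e) (L *\<^sub>R u)"
        by (rule closest_point_lipschitz[OF convex_poly closed_polyh polyh_ne[OF c]])
      moreover have "norm (closest_point (polyh a \<beta>) (L *\<^sub>R u) - closest_point (polyh a (\<lambda>_. L)) (L *\<^sub>R u)) \<le> Kp * (\<Sum>j\<in>UNIV. \<bar>\<beta> j - L\<bar>)"
        using Kp(2) by blast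
      ultimately show ?thesis by (simp add: dist_norm)
    qed
    also have "\<dots> \<le> SA + Kp * (N * (ln B + ln L))"
      using enorm bdiff Kp(1) by (simp add: add_mono mult_left_mono)
    also have "\<dots> \<le> K * ln L"
    proof -
      have "SA \<le> SA * ln L" using SA0 lnL by (simp add: mult_le_cancel_left1)
      moreover have "Kp * (N * (ln B + ln L)) \<le> Kp * N * (ln B + 1) * ln L"
      proof -
        have "ln B * 1 \<le> ln B * ln L" by (rule mult_left_mono[OF lnL lnB])
        then have "ln B + ln L \<le> (ln B + 1) * ln L" by (simp add: algebra_simps)
        then have "N * (ln B + ln L) \<le> N * ((ln B + 1) * ln L)" using N0 by (simp add: mult_left_mono)
        then show ?thesis using Kp(1) by (simp add: mult_left_mono mult.assoc)
      qed
      ultimately show ?thesis unfolding K_def by (simp add: algebra_simps)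
    qed
    finally show ?thesis .
  qed
  then show ?thesis by blast
qed



lemma sgn_diff_bound:
  fixes p q :: "'v::real_normed_vector"
  assumes q: "q \<noteq> 0"
  shows "norm (sgn p - sgn q) \<le> 2 * norm (p - q) / norm q"
proof (cases "p = 0")
  case True
  then show ?thesis using q by (simp add: norm_sgn)
next
  case False
  define np where "np = norm p"
  define nq where "nq = norm q"
  have np: "np > 0" unfolding np_def using False by simp
  have nq: "nq > 0" unfolding nq_def using q by simp
  have eq: "sgn p - sgn q = (1 / np - 1 / nq) *\<^sub>R p + (1 / nq) *\<^sub>R (p - q)"
    unfolding np_def nq_def by (simp add: sgn_div_norm scaleR_diff_left scaleR_diff_right inverse_eq_divide)
  have "norm (sgn p - sgn q) \<le> norm ((1 / np - 1 / nq) *\<^sub>R p) + norm ((1 / nq) *\<^sub>R (p - q))"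
    unfolding eq by (rule norm_triangle_ineq)
  also have "norm ((1 / np - 1 / nq) *\<^sub>R p) = \<bar>1 / np - 1 / nq\<bar> * np" unfolding np_def by simp
  also have "\<bar>1 / np - 1 / nq\<bar> * np = \<bar>nq - np\<bar> / nq"
  proof -
    have "(1 / np - 1 / nq) * np = (nq - np) / nq" using np nq by (simp add: field_simps)
    then have "\<bar>(1 / np - 1 / nq) * np\<bar> = \<bar>(nq - np) / nq\<bar>" by simp
    then show ?thesis using nq np by (simp add: abs_mult)
  qed
  also have "\<bar>nq - np\<bar> \<le> norm (p - q)" unfolding np_def nq_def
    using norm_triangle_ineq3[of p q] by (simp add: abs_minus_commute)
  then have "\<bar>nq - np\<bar> / nq \<le> norm (p - q) / nq" using nq by (simp add: divide_right_mono)
  also have "norm ((1 / nq) *\<^sub>R (p - q)) = norm (p - q) / nq" using nq by simp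
  finally show ?thesis unfolding nq_def by simp
qed

definition av :: "real^'d^'n^'m \<Rightarrow> ('m \<Rightarrow> 'n \<Rightarrow> real) \<Rightarrow> 'm \<Rightarrow> 'n \<Rightarrow> real^'d" where
  "av X y i j = y i j *\<^sub>R (X $ i $ j)"

lemma Cset_polyh: "Cset X y i = polyh (av X y i) (\<lambda>_. 1)"
  unfolding Cset_def polyh_def av_def by simp

lemma local_obj_pobj: "local_obj X y lam w0 i = pobj (av X y i) lam w0"
  unfolding local_obj_def pobj_def av_def by (simp add: fun_eq_iff)

lemma local_min_kkt:
  assumes "lam > 0"
  shows "kkt (av X y i) lam w0 (local_min X y lam w0 i)"
proof -
  obtain w where w: "kkt (av X y i) lam w0 w" using kkt_exists[OF assms] by blast
  have "local_min X y lam w0 i = w"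
    unfolding local_min_def local_obj_pobj by (rule kkt_unique_min[OF assms w])
  then show ?thesis using w by simp
qed

lemma ppm_facts:
  fixes X :: "real^'d^'n::finite^'m::finite" and y :: "'m \<Rightarrow> 'n \<Rightarrow> real"
  assumes wb: "\<forall>i. wb \<in> Cset X y i"
  shows "\<exists>\<eta>>0. \<forall>k. norm (ppm X y k) \<le> 2 * norm wb \<and> (k \<ge> 1 \<longrightarrow> norm (ppm X y k) \<ge> \<eta>)"
proof -
  define M where "M = real CARD('m)"
  have M: "M > 0" unfolding M_def by simp
  have cl: "closed (Cset X y i)" "convex (Cset X y i)" for i
    unfolding Cset_polyh by (rule closed_polyh, rule convex_poly)
  have ne: "Cset X y i \<noteq> {}" for i using wb by blast
  have Pne: "norm (closest_point (Cset X y i) z - wb) \<le> norm (z - wb)" for i z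
  proof -
    have "closest_point (Cset X y i) wb = wb" using wb by (simp add: closest_point_self)
    then show ?thesis using closest_point_lipschitz[OF cl(2)[of i] cl(1)[of i] ne[of i], where x=z and y=wb] by (simp add: dist_norm)
  qed
  have avg: "norm ((1 / M) *\<^sub>R (\<Sum>i\<in>UNIV. f i) - wb) \<le> (1 / M) * (\<Sum>i\<in>UNIV. norm (f i - wb))" for f :: "'m \<Rightarrow> real^'d"
  proof -
    have "(\<Sum>i\<in>(UNIV::'m set). wb) = M *\<^sub>R wb" unfolding M_def by (rule sum_constant_scaleR)
    then have "(1 / M) *\<^sub>R (\<Sum>i\<in>UNIV. f i) - wb = (1 / M) *\<^sub>R (\<Sum>i\<in>UNIV. f i - wb)"
      using M by (simp add: sum_subtractf scaleR_diff_right)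
    then have "norm ((1 / M) *\<^sub>R (\<Sum>i\<in>UNIV. f i) - wb) = (1 / M) * norm (\<Sum>i\<in>UNIV. f i - wb)"
      using M by simp
    also have "\<dots> \<le> (1 / M) * (\<Sum>i\<in>UNIV. norm (f i - wb))"
      using M by (intro mult_left_mono norm_sum) auto
    finally show ?thesis .
  qed
  have ppmS: "ppm X y (Suc k) = (1 / M) *\<^sub>R (\<Sum>i\<in>UNIV. closest_point (Cset X y i) (ppm X y k))" for k
    unfolding M_def by simp
  have stp: "norm (ppm X y (Suc k) - wb) \<le> norm (ppm X y k - wb)" for k
  proof -
    have "norm (ppm X y (Suc k) - wb) \<le> (1 / M) * (\<Sum>i\<in>UNIV. norm (closest_point (Cset X y i) (ppm X y k) - wb))"
      unfolding ppmS by (rule avg)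
    also have "\<dots> \<le> (1 / M) * (\<Sum>i\<in>(UNIV::'m set). norm (ppm X y k - wb))"
      using M by (intro mult_left_mono sum_mono Pne) auto
    also have "\<dots> = norm (ppm X y k - wb)" unfolding M_def by simp
    finally show ?thesis .
  qed
  define \<rho> where "\<rho> = norm (ppm X y 1 - wb)"
  have all: "norm (ppm X y k - wb) \<le> norm wb" for k
  proof (induction k)
    case 0 then show ?case by simp
  next
    case (Suc k) then show ?case using stp[of k] by linarith
  qed
  have later: "k \<ge> 1 \<Longrightarrow> norm (ppm X y k - wb) \<le> \<rho>" for k
  proof (induction k rule: dec_induct)
    case base then show ?case unfolding \<rho>_def by simp
  next
    case (step k) then show ?case using stp[of k] by linarith
  qed
  have strict: "norm (closest_point (Cset X y i) 0 - wb) < norm wb" for i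
  proof -
    define p where "p = closest_point (Cset X y i) 0"
    have pin: "p \<in> Cset X y i" unfolding p_def by (rule closest_point_in_set[OF cl(1) ne])
    have "p \<noteq> 0"
    proof
      assume "p = 0"
      then show False using pin unfolding Cset_def by auto
    qed
    have dot: "(0 - p) \<bullet> (wb - p) \<le> 0" unfolding p_def
      by (rule closest_point_dot[OF cl(2) cl(1)]) (use wb in blast)
    have gen: "(norm (a + b))^2 = (norm a)^2 + 2 * (a \<bullet> b) + (norm b)^2" for a b :: "real^'d"
      unfolding power2_norm_eq_inner by (simp add: inner_add_left inner_add_right inner_commute)
    have "(norm wb)^2 = (norm (wb - p))^2 + 2 * ((wb - p) \<bullet> p) + (norm p)^2"
      using gen[of "wb - p" p] by simp
    moreover have "(wb - p) \<bullet> p \<ge> 0" using dot by (simp add: inner_commute inner_diff_left inner_diff_right)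
    moreover have "(norm p)^2 > 0" using \<open>p \<noteq> 0\<close> by simp
    ultimately have "(norm (wb - p))^2 < (norm wb)^2" by linarith
    then have "(norm (p - wb))^2 < (norm wb)^2" by (simp add: norm_minus_commute)
    then show ?thesis unfolding p_def[symmetric] by (rule power2_less_imp_less) simp
  qed
  have rho: "\<rho> < norm wb"
  proof -
    have "\<rho> \<le> (1 / M) * (\<Sum>i\<in>UNIV. norm (closest_point (Cset X y i) (ppm X y 0) - wb))"
      unfolding \<rho>_def One_nat_def ppmS by (rule avg)
    also have "\<dots> < (1 / M) * (\<Sum>i\<in>(UNIV::'m set). norm wb)"
      using M strict by (intro mult_strict_left_mono sum_strict_mono) auto
    also have "\<dots> = norm wb" unfolding M_def by simp
    finally show ?thesis .
  qed
  have "norm (ppm X y k) \<le> 2 * norm wb \<and> (k \<ge> 1 \<longrightarrow> norm (ppm X y k) \<ge> norm wb - \<rho>)" for k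
  proof
    have "norm (ppm X y k) \<le> norm (ppm X y k - wb) + norm wb"
      using norm_triangle_ineq[of "ppm X y k - wb" wb] by simp
    then show "norm (ppm X y k) \<le> 2 * norm wb" using all[of k] by linarith
    show "k \<ge> 1 \<longrightarrow> norm (ppm X y k) \<ge> norm wb - \<rho>"
    proof
      assume "k \<ge> 1"
      have "norm wb \<le> norm (ppm X y k) + norm (ppm X y k - wb)"
        using norm_triangle_ineq[of "ppm X y k" "wb - ppm X y k"] by (simp add: norm_minus_commute)
      then show "norm (ppm X y k) \<ge> norm wb - \<rho>" using later[OF \<open>k \<ge> 1\<close>] by linarith
    qed
  qed
  then show ?thesis using rho by (intro exI[of _ "norm wb - \<rho>"]) auto
qed



lemma main_bound:
  fixes X :: "real^'d^'n::finite^'m::finite" and y :: "'m \<Rightarrow> 'n \<Rightarrow> real"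
  assumes sep: "separable X y"
  shows "\<exists>Kt\<ge>0. \<exists>\<eta>>0. (\<forall>lam. 0 < lam \<and> lam < exp (- exp 1) \<longrightarrow> (\<forall>k.
            norm (lgd X y lam k - ln (1 / lam) *\<^sub>R ppm X y k) \<le> Kt * real k * ln (ln (1 / lam))))
        \<and> (\<forall>k. k \<ge> 1 \<longrightarrow> norm (ppm X y k) \<ge> \<eta>)"
proof -
  obtain wb where wb: "\<forall>i. wb \<in> Cset X y i" using sep unfolding separable_def by blast
  define R where "R = 2 * norm wb"
  have R0: "R \<ge> 0" unfolding R_def by simp
  obtain \<eta> where \<eta>: "\<eta> > 0" "\<forall>k. norm (ppm X y k) \<le> R \<and> (k \<ge> 1 \<longrightarrow> norm (ppm X y k) \<ge> \<eta>)"
    using ppm_facts[OF wb] unfolding R_def by blast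
  have c: "\<forall>j. 1 \<le> av X y i j \<bullet> wb" for i
    using wb unfolding Cset_polyh polyh_def by blast
  have "\<forall>i. \<exists>K. \<forall>L u w. L \<ge> exp 1 \<longrightarrow> norm u \<le> R \<longrightarrow> kkt (av X y i) (exp (- L)) (L *\<^sub>R u) w \<longrightarrow>
           norm (w - L *\<^sub>R closest_point (polyh (av X y i) (\<lambda>_. 1)) u) \<le> K * ln L"
    using one_step[OF c R0] by blast
  then obtain Kf where Kf: "\<And>i L u w. L \<ge> exp 1 \<Longrightarrow> norm u \<le> R \<Longrightarrow> kkt (av X y i) (exp (- L)) (L *\<^sub>R u) w \<Longrightarrow>
           norm (w - L *\<^sub>R closest_point (polyh (av X y i) (\<lambda>_. 1)) u) \<le> Kf i * ln L"
    by metis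
  define Kt where "Kt = (\<Sum>i\<in>UNIV. \<bar>Kf i\<bar>)"
  have Kt0: "Kt \<ge> 0" unfolding Kt_def by (simp add: sum_nonneg)
  have Kfi: "\<bar>Kf i\<bar> \<le> Kt" for i unfolding Kt_def by (rule member_le_sum) auto
  define M where "M = real CARD('m)"
  have M: "M > 0" unfolding M_def by simp
  have bound: "norm (lgd X y lam k - ln (1 / lam) *\<^sub>R ppm X y k) \<le> Kt * real k * ln (ln (1 / lam))"
    if lam: "0 < lam" "lam < exp (- exp 1)" for lam k
  proof -
    define L where "L = ln (1 / lam)"
    have expL: "exp (- L) = lam" unfolding L_def using lam by (simp add: ln_div)
    have "1 / lam > exp (exp 1)"
    proof -
      have "1 / lam > 1 / exp (- exp 1)" using lam by (intro divide_strict_left_mono) auto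
      then show ?thesis by (simp add: exp_minus inverse_eq_divide)
    qed
    then have LL: "L \<ge> exp 1" unfolding L_def using lam
      by (metis exp_gt_zero less_imp_le ln_exp ln_less_cancel_iff zero_less_divide_1_iff)
    have lnL: "ln L \<ge> 1" using LL by (metis exp_gt_zero ln_exp ln_le_cancel_iff order_less_le_trans)
    show ?thesis unfolding L_def[symmetric]
    proof (induction k)
      case 0 then show ?case by simp
    next
      case (Suc k)
      define e where "e = norm (lgd X y lam k - L *\<^sub>R ppm X y k)"
      let ?T = "\<lambda>w i. local_min X y lam w i"
      let ?P = "\<lambda>i. closest_point (Cset X y i) (ppm X y k)"
      have each: "norm (?T (lgd X y lam k) i - L *\<^sub>R ?P i) \<le> e + Kt * ln L" for i
      proof -
        have "norm (?T (lgd X y lam k) i - ?T (L *\<^sub>R ppm X y k) i) \<le> e" unfolding e_def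
          by (rule kkt_nonexp[OF lam(1) local_min_kkt[OF lam(1)] local_min_kkt[OF lam(1)]])
        moreover have "norm (?T (L *\<^sub>R ppm X y k) i - L *\<^sub>R ?P i) \<le> Kf i * ln L"
          unfolding Cset_polyh
          by (rule Kf[OF LL]) (use \<eta> local_min_kkt[OF lam(1)] expL in auto)
        moreover have "Kf i * ln L \<le> Kt * ln L"
          using Kfi[of i] lnL by (intro mult_right_mono) auto
        ultimately show ?thesis
          using norm_triangle_ineq[of "?T (lgd X y lam k) i - ?T (L *\<^sub>R ppm X y k) i" "?T (L *\<^sub>R ppm X y k) i - L *\<^sub>R ?P i"]
          by simp
      qed
      have "lgd X y lam (Suc k) - L *\<^sub>R ppm X y (Suc k) = (1 / M) *\<^sub>R (\<Sum>i\<in>UNIV. ?T (lgd X y lam k) i - L *\<^sub>R ?P i)"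
        unfolding M_def by (simp add: sum_subtractf scaleR_diff_right scaleR_sum_right)
      then have "norm (lgd X y lam (Suc k) - L *\<^sub>R ppm X y (Suc k)) = (1 / M) * norm (\<Sum>i\<in>UNIV. ?T (lgd X y lam k) i - L *\<^sub>R ?P i)"
        using M by simp
      also have "\<dots> \<le> (1 / M) * (\<Sum>i\<in>UNIV. norm (?T (lgd X y lam k) i - L *\<^sub>R ?P i))"
        using M by (intro mult_left_mono norm_sum) auto
      also have "\<dots> \<le> (1 / M) * (\<Sum>i\<in>(UNIV::'m set). e + Kt * ln L)"
        using M each by (intro mult_left_mono sum_mono) auto
      also have "\<dots> = e + Kt * ln L" unfolding M_def by simp
      also have "\<dots> \<le> Kt * real k * ln L + Kt * ln L" using Suc.IH unfolding e_def by simp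
      also have "\<dots> = Kt * real (Suc k) * ln L" by (simp add: algebra_simps)
      finally show ?case .
    qed
  qed
  show ?thesis using Kt0 \<eta> bound by blast
qed

lemma L_facts:
  fixes lam :: real
  assumes lam: "0 < lam" "lam < exp (- exp 1)"
  shows "ln (1 / lam) \<ge> exp 1" "ln (ln (1 / lam)) \<ge> 1"
proof -
  have "1 / lam > exp (exp 1)"
  proof -
    have "1 / lam > 1 / exp (- exp 1)" using divide_strict_left_mono[OF lam(2), of 1] lam by simp
    then show ?thesis by (simp add: exp_minus inverse_eq_divide)
  qed
  then show LL: "ln (1 / lam) \<ge> exp 1" using lam
    by (metis exp_gt_zero less_imp_le ln_exp ln_less_cancel_iff zero_less_divide_1_iff)
  then show "ln (ln (1 / lam)) \<ge> 1" by (metis exp_gt_zero ln_exp ln_le_cancel_iff order_less_le_trans)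
qed

theorem lemma2:
  fixes y :: "'m::finite \<Rightarrow> 'n::finite \<Rightarrow> real"
  assumes "\<forall>i j. y i j = 1 \<or> y i j = -1"
  shows "AE X in (lborel :: (real^'d^'n^'m) measure).
     separable X y \<longrightarrow>
       (\<exists>C. \<forall>\<^sub>F lam in at_right 0. \<forall>k.
            norm (lgd X y lam k - ln (1 / lam) *\<^sub>R ppm X y k) \<le> C * real k * ln (ln (1 / lam)))
     \<and> (\<forall>kf :: real \<Rightarrow> nat.
            (\<lambda>lam. real (kf lam)) \<in> o[at_right 0](\<lambda>lam. ln (1 / lam) / ln (ln (1 / lam))) \<longrightarrow>
            ((\<lambda>lam. sgn (lgd X y lam (kf lam)) - sgn (ppm X y (kf lam))) \<longlongrightarrow> 0) (at_right 0))"
proof -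
  have main: "separable X y \<longrightarrow>
       (\<exists>C. \<forall>\<^sub>F lam in at_right 0. \<forall>k.
            norm (lgd X y lam k - ln (1 / lam) *\<^sub>R ppm X y k) \<le> C * real k * ln (ln (1 / lam)))
     \<and> (\<forall>kf :: real \<Rightarrow> nat.
            (\<lambda>lam. real (kf lam)) \<in> o[at_right 0](\<lambda>lam. ln (1 / lam) / ln (ln (1 / lam))) \<longrightarrow>
            ((\<lambda>lam. sgn (lgd X y lam (kf lam)) - sgn (ppm X y (kf lam))) \<longlongrightarrow> 0) (at_right 0))"
    for X :: "real^'d^'n^'m"
  proof
    assume sep: "separable X y"
    obtain Kt \<eta> where Kt0: "Kt \<ge> 0" and \<eta>: "\<eta> > 0"
      and bound: "\<And>lam k. 0 < lam \<Longrightarrow> lam < exp (- exp 1) \<Longrightarrow>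
            norm (lgd X y lam k - ln (1 / lam) *\<^sub>R ppm X y k) \<le> Kt * real k * ln (ln (1 / lam))"
      and low: "\<And>k. k \<ge> 1 \<Longrightarrow> norm (ppm X y k) \<ge> \<eta>"
      using main_bound[OF sep] by blast
    have ev: "\<forall>\<^sub>F lam in at_right (0::real). 0 < lam \<and> lam < exp (- exp 1)"
      by (rule eventually_at_rightI[of "0::real" "exp (- exp (1::real))"]) auto
    show "(\<exists>C. \<forall>\<^sub>F lam in at_right 0. \<forall>k.
            norm (lgd X y lam k - ln (1 / lam) *\<^sub>R ppm X y k) \<le> C * real k * ln (ln (1 / lam)))
     \<and> (\<forall>kf :: real \<Rightarrow> nat.
            (\<lambda>lam. real (kf lam)) \<in> o[at_right 0](\<lambda>lam. ln (1 / lam) / ln (ln (1 / lam))) \<longrightarrow>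
            ((\<lambda>lam. sgn (lgd X y lam (kf lam)) - sgn (ppm X y (kf lam))) \<longlongrightarrow> 0) (at_right 0))"
    proof
      show "\<exists>C. \<forall>\<^sub>F lam in at_right 0. \<forall>k.
            norm (lgd X y lam k - ln (1 / lam) *\<^sub>R ppm X y k) \<le> C * real k * ln (ln (1 / lam))"
        using ev bound by (intro exI[of _ Kt]) (auto elim: eventually_mono)
      show "\<forall>kf :: real \<Rightarrow> nat.
            (\<lambda>lam. real (kf lam)) \<in> o[at_right 0](\<lambda>lam. ln (1 / lam) / ln (ln (1 / lam))) \<longrightarrow>
            ((\<lambda>lam. sgn (lgd X y lam (kf lam)) - sgn (ppm X y (kf lam))) \<longlongrightarrow> 0) (at_right 0)"
      proof (intro allI impI)
        fix kf :: "real \<Rightarrow> nat"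
        assume o: "(\<lambda>lam. real (kf lam)) \<in> o[at_right 0](\<lambda>lam. ln (1 / lam) / ln (ln (1 / lam)))"
        show "((\<lambda>lam. sgn (lgd X y lam (kf lam)) - sgn (ppm X y (kf lam))) \<longlongrightarrow> 0) (at_right 0)"
          unfolding tendsto_iff
        proof (intro allI impI)
          fix \<epsilon> :: real assume \<epsilon>: "\<epsilon> > 0"
          define \<delta> where "\<delta> = \<epsilon> * \<eta> / (2 * (Kt + 1))"
          have \<delta>: "\<delta> > 0" unfolding \<delta>_def using \<epsilon> \<eta> Kt0 by simp
          have ev2: "\<forall>\<^sub>F lam in at_right 0. norm (real (kf lam)) \<le> \<delta> * norm (ln (1 / lam) / ln (ln (1 / lam)))"
            by (rule landau_o.smallD[OF o \<delta>])
          show "\<forall>\<^sub>F lam in at_right 0. dist (sgn (lgd X y lam (kf lam)) - sgn (ppm X y (kf lam))) 0 < \<epsilon>"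
            using ev ev2
          proof eventually_elim
            case (elim lam)
            define L where "L = ln (1 / lam)"
            define k where "k = kf lam"
            have LL: "L \<ge> exp 1" and lnL: "ln L \<ge> 1" unfolding L_def using L_facts elim(1) by auto
            have Lpos: "L > 0" using LL by (meson exp_gt_zero order_less_le_trans)
            have bk: "norm (lgd X y lam k - L *\<^sub>R ppm X y k) \<le> Kt * real k * ln L"
              unfolding L_def using bound elim(1) by auto
            have kb: "real k \<le> \<delta> * (L / ln L)"
              using elim(2) lnL Lpos unfolding L_def[symmetric] k_def[symmetric] by simp
            show ?case
            proof (cases "k = 0")
              case True then show ?thesis using \<epsilon> unfolding k_def[symmetric] by simp
            next
              case False
              then have k1: "k \<ge> 1" by simp
              define q where "q = L *\<^sub>R ppm X y k"
              have nq: "norm q \<ge> L * \<eta>" unfolding q_def using low[OF k1] Lpos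
                by (simp add: mult_left_mono)
              have nqpos: "norm q > 0" using nq Lpos \<eta> by (meson mult_pos_pos order_less_le_trans)
              have sq: "sgn q = sgn (ppm X y k)" unfolding q_def using Lpos by (simp add: sgn_scaleR)
              have "norm (sgn (lgd X y lam k) - sgn (ppm X y k)) \<le> 2 * norm (lgd X y lam k - q) / norm q"
                unfolding sq[symmetric] by (rule sgn_diff_bound) (use nqpos in auto)
              also have "\<dots> \<le> 2 * (Kt * real k * ln L) / (L * \<eta>)"
              proof (rule frac_le)
                show "0 \<le> 2 * (Kt * real k * ln L)" using Kt0 lnL by simp
                show "2 * norm (lgd X y lam k - q) \<le> 2 * (Kt * real k * ln L)" using bk unfolding q_def by simp
                show "0 < L * \<eta>" using Lpos \<eta> by simp
                show "L * \<eta> \<le> norm q" by (rule nq)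
              qed
              also have "\<dots> \<le> 2 * (Kt * (\<delta> * L)) / (L * \<eta>)"
              proof -
                have "real k * ln L \<le> \<delta> * L"
                  using mult_right_mono[OF kb, of "ln L"] lnL by simp
                then have "Kt * (real k * ln L) \<le> Kt * (\<delta> * L)" using Kt0 by (rule mult_left_mono)
                then show ?thesis using Lpos \<eta> by (intro divide_right_mono) (auto simp: mult.assoc)
              qed
              also have "\<dots> = \<epsilon> * (Kt / (Kt + 1))"
              proof -
                have k1: "Kt + 1 \<noteq> 0" "1 + Kt \<noteq> 0" "L \<noteq> 0" "\<eta> \<noteq> 0" using Kt0 Lpos \<eta> by auto
                have aux: "t > 0 \<Longrightarrow> n > 0 \<Longrightarrow> 2 * (K * ((e * n / (2 * t)) * L)) / (L * n) = e * (K / t)"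
                  for t K e n :: real using Lpos \<eta> by (simp add: field_simps)
                show ?thesis unfolding \<delta>_def by (rule aux) (use Kt0 \<eta> in auto)
              qed
              also have "\<dots> < \<epsilon>"
              proof -
                have "Kt / (Kt + 1) < 1" using Kt0 by simp
                then have "\<epsilon> * (Kt / (Kt + 1)) < \<epsilon> * 1" using \<epsilon> by (intro mult_strict_left_mono) auto
                then show ?thesis by simp
              qed
              finally show ?thesis unfolding k_def dist_norm by simp
            qed
          qed
        qed
      qed
    qed
  qed
  then show ?thesis by (intro AE_I2) blast
qed

end
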